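(* Let $\mathcal{I}$ be a set of $n$ intervals (circular arcs) on the unit circle, and let $G=(\mathcal{I},E)$ be the associated intersection graph. Then $|E|=O(\alpha\,\omega^2)$, where $\omega$ is the maximum depth of $\mathcal{I}$ and $\alpha$ is the size of the largest independent set in $G$. Furthermore, this upper bound on $|E|$ is tight (there are such families with $\Omega(\alpha\,\omega^2)$ edges).
   Context: The depth of a point of the circle is the number of intervals of $\mathcal{I}$ containing it; the maximum depth of $\mathcal{I}$ is the maximum depth over all points of the circle. Two intervals are adjacent in the intersection graph if they intersect. *)

theory Defs
  imports "HOL-Analysis.Analysis"
begin

text \<open>Points of the unit circle are complex numbers of modulus 1. A (closed) interval,
i.e. circular arc, is the image of a real interval [a, a+l] of angles under cis,
with 0 <= l <= 2*pi (l = 0 gives a single point, l = 2*pi the whole circle).\<close>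

definition circ_arc :: "real \<Rightarrow> real \<Rightarrow> complex set" where
  "circ_arc a l = cis ` {a..a+l}"

definition is_arc :: "complex set \<Rightarrow> bool" where
  "is_arc A \<longleftrightarrow> (\<exists>a l. 0 \<le> l \<and> l \<le> 2*pi \<and> A = circ_arc a l)"

definition depth :: "complex set set \<Rightarrow> complex \<Rightarrow> nat" where
  "depth F z = card {A \<in> F. z \<in> A}"

definition max_depth :: "complex set set \<Rightarrow> nat" where
  "max_depth F = Max (depth F ` sphere 0 1)"

definition ig_edges :: "complex set set \<Rightarrow> complex set set set" where
  "ig_edges F = {{A, B} | A B. A \<in> F \<and> B \<in> F \<and> A \<noteq> B \<and> A \<inter> B \<noteq> {}}"

definition indep_number :: "complex set set \<Rightarrow> nat" where
  "indep_number F = Max {card S | S. S \<subseteq> F \<and> pairwise (\<lambda>A B. A \<inter> B = {}) S}"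

end

theory Submission
  imports Defs
begin

lemma cis_per: "cis (x + 2*pi * of_int k) = cis x"
  by (metis cis_mult cis_multiple_2pi Ints_of_int mult.right_neutral)

lemma cis_eqE: assumes "cis x = cis y" shows "\<exists>n::int. y = x + 2*pi * of_int n"
proof -
  have "sin y = sin x \<and> cos y = cos x" using assms
    by (metis cis.sel(1) cis.sel(2))
  then show ?thesis using sin_cos_eq_iff by blast
qed

lemma cis_inj_win: assumes "cis x = cis y" "\<bar>x - y\<bar> < 2*pi" shows "x = y"
proof -
  obtain n::int where n: "y = x + 2*pi * of_int n" using cis_eqE[OF assms(1)] by blast
  then have "\<bar>2*pi * of_int n\<bar> < 2*pi" using assms(2) by simp
  then have "\<bar>of_int n::real\<bar> < 1" by (simp add: abs_mult)
  then have "n = 0" by linarith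
  then show ?thesis using n by simp
qed

definition rep :: "complex set \<Rightarrow> real \<times> real" where
  "rep A = (SOME p. 0 \<le> snd p \<and> snd p \<le> 2*pi \<and> A = circ_arc (fst p) (snd p))"

lemma rep: assumes "is_arc A"
  shows "0 \<le> snd (rep A) \<and> snd (rep A) \<le> 2*pi \<and> A = circ_arc (fst (rep A)) (snd (rep A))"
proof -
  obtain a l where "0 \<le> l \<and> l \<le> 2*pi \<and> A = circ_arc a l" using assms unfolding is_arc_def by blast
  then have "\<exists>p. 0 \<le> snd p \<and> snd p \<le> 2*pi \<and> A = circ_arc (fst p) (snd p)" by (intro exI[of _ "(a,l)"]) simp
  then show ?thesis unfolding rep_def by (rule someI_ex)
qed

lemma arc_meet:
  assumes "circ_arc a l \<inter> circ_arc b m \<noteq> {}"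
  shows "cis a \<in> circ_arc b m \<or> cis b \<in> circ_arc a l"
proof -
  obtain t s where ts: "t \<in> {a..a+l}" "s \<in> {b..b+m}" "cis t = cis s"
    using assms unfolding circ_arc_def by blast
  obtain n::int where n: "s = t + 2*pi * of_int n" using cis_eqE[OF ts(3)] by blast
  show ?thesis
  proof (cases "b - 2*pi * of_int n \<le> a")
    case True
    have "a + 2*pi * of_int n \<in> {b..b+m}" using True ts n by auto
    moreover have "cis (a + 2*pi * of_int n) = cis a" by (rule cis_per)
    ultimately show ?thesis unfolding circ_arc_def by (metis image_eqI)
  next
    case False
    have "b - 2*pi * of_int n \<in> {a..a+l}" using False ts n by auto
    moreover have "cis (b - 2*pi * of_int n) = cis b"
      using cis_per[of "b - 2*pi * of_int n" n] by simp
    ultimately show ?thesis unfolding circ_arc_def by (metis image_eqI)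
  qed
qed

lemma depth_le: assumes "finite F" "z \<in> sphere 0 1" shows "depth F z \<le> max_depth F"
proof -
  have "depth F ` sphere 0 1 \<subseteq> {..card F}"
    unfolding depth_def using assms(1) by (auto intro: card_mono)
  then have "finite (depth F ` sphere 0 1)" by (rule finite_subset) simp
  then show ?thesis unfolding max_depth_def using assms(2) by (intro Max_ge) auto
qed

lemma indep_le: assumes "finite F" "S \<subseteq> F" "pairwise (\<lambda>A B. A \<inter> B = {}) S"
  shows "card S \<le> indep_number F"
proof -
  have "{card S | S. S \<subseteq> F \<and> pairwise (\<lambda>A B. A \<inter> B = {}) S} \<subseteq> {..card F}"
    using assms(1) by (auto intro: card_mono)
  then have "finite {card S | S. S \<subseteq> F \<and> pairwise (\<lambda>A B. A \<inter> B = {}) S}" by (rule finite_subset) simp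
  then show ?thesis unfolding indep_number_def using assms by (intro Max_ge) auto
qed

lemma edges_le: assumes "finite F" "\<forall>A\<in>F. is_arc A"
  shows "card (ig_edges F) \<le> card F * max_depth F"
proof -
  define e where "e A = cis (fst (rep A))" for A
  have sub: "ig_edges F \<subseteq> (\<Union>A\<in>F. (\<lambda>B. {A,B}) ` {B\<in>F. e A \<in> B})"
  proof
    fix x assume "x \<in> ig_edges F"
    then obtain A B where AB: "x = {A,B}" "A \<in> F" "B \<in> F" "A \<inter> B \<noteq> {}"
      unfolding ig_edges_def by blast
    have rA: "A = circ_arc (fst (rep A)) (snd (rep A))" using rep assms AB by blast
    have rB: "B = circ_arc (fst (rep B)) (snd (rep B))" using rep assms AB by blast
    have "e A \<in> B \<or> e B \<in> A" unfolding e_def using arc_meet AB(4) rA rB by metis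
    then show "x \<in> (\<Union>A\<in>F. (\<lambda>B. {A,B}) ` {B\<in>F. e A \<in> B})"
      using AB by (auto simp: insert_commute)
  qed
  have "card (ig_edges F) \<le> card (\<Union>A\<in>F. (\<lambda>B. {A,B}) ` {B\<in>F. e A \<in> B})"
    using sub assms(1) by (intro card_mono) auto
  also have "\<dots> \<le> (\<Sum>A\<in>F. card ((\<lambda>B. {A,B}) ` {B\<in>F. e A \<in> B}))"
    by (rule card_UN_le[OF assms(1)])
  also have "\<dots> \<le> (\<Sum>A\<in>F. max_depth F)"
  proof (rule sum_mono)
    fix A assume "A \<in> F"
    have "card ((\<lambda>B. {A,B}) ` {B\<in>F. e A \<in> B}) \<le> card {B\<in>F. e A \<in> B}"
      using assms(1) by (intro card_image_le) auto
    also have "\<dots> = depth F (e A)" unfolding depth_def ..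
    also have "\<dots> \<le> max_depth F" using assms(1) by (intro depth_le) (auto simp: e_def)
    finally show "card ((\<lambda>B. {A,B}) ` {B\<in>F. e A \<in> B}) \<le> max_depth F" .
  qed
  finally show ?thesis by simp
qed

lemma line_stab:
  fixes lo hi :: "complex set \<Rightarrow> real"
  assumes "finite G" "\<forall>A\<in>G. \<theta> < lo A \<and> lo A \<le> hi A \<and> hi A < \<theta> + 2*pi \<and> A = cis ` {lo A..hi A}"
    "\<forall>t. card {A\<in>G. cis t \<in> A} \<le> w"
  shows "\<exists>S\<subseteq>G. pairwise (\<lambda>A B. A \<inter> B = {}) S \<and> card G \<le> card S * w"
  using assms
proof (induction "card G" arbitrary: G rule: less_induct)
  case less
  show ?case
  proof (cases "G = {}")
    case True then show ?thesis by auto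
  next
    case False
    have "Min (hi ` G) \<in> hi ` G" using False less.prems(1) by (intro Min_in) auto
    then obtain A0 where A0: "A0 \<in> G" "hi A0 = Min (hi ` G)" by auto
    have minhi: "hi A0 \<le> hi B" if "B \<in> G" for B
      unfolding A0(2) using that less.prems(1) by (intro Min_le) auto
    define r where "r = hi A0"
    define H where "H = {B\<in>G. cis r \<in> B}"
    define G2 where "G2 = G - H"
    have "cis (hi A0) \<in> A0"
    proof -
      have "hi A0 \<in> {lo A0..hi A0}" using A0 less.prems(2) by auto
      then show ?thesis using A0 less.prems(2) by (metis image_eqI)
    qed
    then have A0H: "A0 \<in> H" unfolding H_def r_def using A0 by auto
    have cardH: "card H \<le> w" unfolding H_def using less.prems(3) by blast
    have finH: "finite H" using less.prems(1) H_def by simp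
    have c1: "card G2 < card G" unfolding G2_def using A0H A0 less.prems(1) H_def
      by (intro psubset_card_mono) auto
    have c2: "finite G2" using less.prems(1) G2_def by simp
    have c3: "\<forall>A\<in>G2. \<theta> < lo A \<and> lo A \<le> hi A \<and> hi A < \<theta> + 2*pi \<and> A = cis ` {lo A..hi A}"
      using less.prems(2) G2_def by auto
    have c4: "\<forall>t. card {A\<in>G2. cis t \<in> A} \<le> w"
    proof
      fix t
      have "card {A\<in>G2. cis t \<in> A} \<le> card {A\<in>G. cis t \<in> A}"
        using less.prems(1) G2_def by (intro card_mono) auto
      then show "card {A\<in>G2. cis t \<in> A} \<le> w" using less.prems(3) by (meson le_trans)
    qed
    obtain S2 where S2: "S2 \<subseteq> G2" "pairwise (\<lambda>A B. A \<inter> B = {}) S2" "card G2 \<le> card S2 * w"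
      using less.hyps[OF c1 c2 c3 c4] by blast
    have disj: "A0 \<inter> B = {}" if "B \<in> G2" for B
    proof (rule ccontr)
      assume "A0 \<inter> B \<noteq> {}"
      then obtain z where z: "z \<in> A0" "z \<in> B" by blast
      have B: "B \<in> G" "cis r \<notin> B" using that G2_def H_def by auto
      have fA: "\<theta> < lo A0 \<and> lo A0 \<le> hi A0 \<and> hi A0 < \<theta> + 2*pi \<and> A0 = cis ` {lo A0..hi A0}"
        using less.prems(2) A0 by blast
      have fB: "\<theta> < lo B \<and> lo B \<le> hi B \<and> hi B < \<theta> + 2*pi \<and> B = cis ` {lo B..hi B}"
        using less.prems(2) B by blast
      obtain x where x: "x \<in> {lo A0..hi A0}" "z = cis x" using z(1) fA by blast
      obtain y where y: "y \<in> {lo B..hi B}" "z = cis y" using z(2) fB by blast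
      have "r \<notin> {lo B..hi B}" using B fB by auto
      moreover have "r \<le> hi B" using minhi B r_def by simp
      ultimately have "r < lo B" by auto
      have "\<bar>x - y\<bar> < 2*pi" using x y fA fB by auto
      then have "x = y" using x y cis_inj_win by metis
      then show False using x y \<open>r < lo B\<close> r_def by auto
    qed
    define S where "S = insert A0 S2"
    have "A0 \<notin> S2" using S2 A0H G2_def by auto
    have "finite S2" using S2 \<open>finite G2\<close> finite_subset by blast
    have "S \<subseteq> G" using S2 A0 G2_def S_def by auto
    moreover have "pairwise (\<lambda>A B. A \<inter> B = {}) S" unfolding S_def
      using S2 disj by (auto simp: pairwise_insert)
    moreover have "card G \<le> card S * w"
    proof -
      have "G = H \<union> G2" "H \<inter> G2 = {}" using H_def G2_def by auto
      then have "card G = card H + card G2" using finH \<open>finite G2\<close> by (simp add: card_Un_disjoint)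
      also have "\<dots> \<le> w + card S2 * w" using cardH S2 by simp
      also have "\<dots> = card S * w" using S_def \<open>A0 \<notin> S2\<close> \<open>finite S2\<close> by simp
      finally show ?thesis .
    qed
    ultimately show ?thesis by blast
  qed
qed

lemma normalize_arc:
  assumes "is_arc A" "1 \<notin> A"
  shows "\<exists>p. 0 < fst p \<and> fst p \<le> snd p \<and> snd p < 2*pi \<and> A = cis ` {fst p..snd p}"
proof -
  define a where "a = fst (rep A)"
  define l where "l = snd (rep A)"
  have r: "0 \<le> l" "l \<le> 2*pi" "A = cis ` {a..a+l}" using rep[OF assms(1)] unfolding a_def l_def circ_arc_def by auto
  define k where "k = \<lfloor>a / (2*pi)\<rfloor>"
  define a' where "a' = a - 2*pi * of_int k"
  have k1: "of_int k \<le> a / (2*pi)" "a / (2*pi) < of_int k + 1" unfolding k_def by linarith+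
  have "2*pi * of_int k \<le> a" using k1(1) pi_gt_zero by (simp add: field_simps)
  moreover have "a < 2*pi * of_int k + 2*pi" using k1(2) pi_gt_zero by (simp add: field_simps)
  ultimately have a': "0 \<le> a'" "a' < 2*pi" unfolding a'_def by auto
  have eq: "cis ` {a..a+l} = cis ` {a'..a'+l}"
  proof
    show "cis ` {a..a+l} \<subseteq> cis ` {a'..a'+l}"
    proof
      fix z assume "z \<in> cis ` {a..a+l}"
      then obtain x where x: "x \<in> {a..a+l}" "z = cis x" by blast
      have "cis (x - 2*pi * of_int k) = cis x" using cis_per[of "x - 2*pi * of_int k" k] by simp
      moreover have "x - 2*pi * of_int k \<in> {a'..a'+l}" using x a'_def by auto
      ultimately show "z \<in> cis ` {a'..a'+l}" using x by (metis image_eqI)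
    qed
  next
    show "cis ` {a'..a'+l} \<subseteq> cis ` {a..a+l}"
    proof
      fix z assume "z \<in> cis ` {a'..a'+l}"
      then obtain x where x: "x \<in> {a'..a'+l}" "z = cis x" by blast
      have "cis (x + 2*pi * of_int k) = cis x" by (rule cis_per)
      moreover have "x + 2*pi * of_int k \<in> {a..a+l}" using x a'_def by auto
      ultimately show "z \<in> cis ` {a..a+l}" using x by (metis image_eqI)
    qed
  qed
  have A: "A = cis ` {a'..a'+l}" using r eq by simp
  have "a' \<noteq> 0"
  proof
    assume "a' = 0"
    then have "0 \<in> {a'..a'+l}" using r by auto
    then have "cis 0 \<in> A" using A by blast
    then show False using assms(2) by simp
  qed
  have "a' + l < 2*pi"
  proof (rule ccontr)
    assume "\<not> a' + l < 2*pi"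
    then have "2*pi \<in> {a'..a'+l}" using a' by auto
    then have "cis (2*pi) \<in> A" using A by blast
    then show False using assms(2) by simp
  qed
  then show ?thesis using A a' r \<open>a' \<noteq> 0\<close> by (intro exI[of _ "(a', a'+l)"]) auto
qed

lemma count_le:
  assumes "finite F" "\<forall>A\<in>F. is_arc A" "F \<noteq> {}"
  shows "card F \<le> 2 * indep_number F * max_depth F"
proof -
  define w where "w = max_depth F"
  define F1 where "F1 = {A\<in>F. 1 \<in> A}"
  define F' where "F' = F - F1"
  have c1: "card F1 \<le> w" unfolding F1_def w_def using depth_le[OF assms(1), of 1] by (simp add: depth_def)
  define lh where "lh A = (SOME p. 0 < fst p \<and> fst p \<le> snd p \<and> snd p < 2*pi \<and> A = cis ` {fst p..snd p})" for A
  have lh: "0 < fst (lh A) \<and> fst (lh A) \<le> snd (lh A) \<and> snd (lh A) < 2*pi \<and> A = cis ` {fst (lh A)..snd (lh A)}"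
    if "A \<in> F'" for A
  proof -
    have "A \<in> F" "1 \<notin> A" using that F'_def F1_def by auto
    then have "\<exists>p. 0 < fst p \<and> fst p \<le> snd p \<and> snd p < 2*pi \<and> A = cis ` {fst p..snd p}"
      using normalize_arc assms(2) by blast
    then show ?thesis unfolding lh_def by (rule someI_ex)
  qed
  have fF': "finite F'" using assms(1) F'_def by simp
  have h3: "\<forall>t. card {A\<in>F'. cis t \<in> A} \<le> w"
  proof
    fix t
    have "card {A\<in>F'. cis t \<in> A} \<le> card {A\<in>F. cis t \<in> A}"
      using assms(1) F'_def by (intro card_mono) auto
    also have "\<dots> \<le> w" using depth_le[OF assms(1), of "cis t"] w_def by (simp add: depth_def)
    finally show "card {A\<in>F'. cis t \<in> A} \<le> w" .
  qed
  obtain S where S: "S \<subseteq> F'" "pairwise (\<lambda>A B. A \<inter> B = {}) S" "card F' \<le> card S * w"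
  proof -
    have "\<forall>A\<in>F'. 0 < fst (lh A) \<and> fst (lh A) \<le> snd (lh A) \<and> snd (lh A) < 0 + 2*pi \<and> A = cis ` {fst (lh A)..snd (lh A)}"
      using lh by simp
    from line_stab[OF fF' this h3] show ?thesis using that by blast
  qed
  have "card S \<le> indep_number F" using indep_le[OF assms(1)] S F'_def by auto
  then have c2: "card F' \<le> indep_number F * w" using S(3) by (meson le_trans mult_le_mono1)
  obtain A where "A \<in> F" using assms(3) by blast
  then have "card {A} \<le> indep_number F" using indep_le[OF assms(1), of "{A}"] by simp
  then have a1: "1 \<le> indep_number F" by simp
  have "F = F1 \<union> F'" "F1 \<inter> F' = {}" using F1_def F'_def by auto
  then have "card F = card F1 + card F'" using assms(1) by (metis card_Un_disjoint finite_Un)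
  also have "\<dots> \<le> w + indep_number F * w" using c1 c2 by simp
  also have "\<dots> \<le> 2 * indep_number F * w"
  proof -
    have "w \<le> indep_number F * w" using a1 by simp
    then show ?thesis by (simp add: mult_2 distrib_right del: mult_le_cancel2)
  qed
  finally show ?thesis unfolding w_def .
qed

lemma part1: "finite F \<Longrightarrow> \<forall>A\<in>F. is_arc A \<Longrightarrow>
   real (card (ig_edges F)) \<le> 2 * real (indep_number F) * (real (max_depth F))^2"
proof -
  assume a: "finite F" "\<forall>A\<in>F. is_arc A"
  have e: "card (ig_edges F) \<le> card F * max_depth F" using edges_le a by blast
  have "card F * max_depth F \<le> 2 * indep_number F * max_depth F * max_depth F"
  proof (cases "F = {}")
    case True then show ?thesis by simp
  next
    case False then show ?thesis using count_le[OF a False] by simp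
  qed
  then have "card (ig_edges F) \<le> 2 * indep_number F * max_depth F * max_depth F" using e by linarith
  then have "real (card (ig_edges F)) \<le> real (2 * indep_number F * max_depth F * max_depth F)" by linarith
  then show ?thesis by (simp add: power2_eq_square mult.assoc)
qed

lemma cluster_family:
  fixes Arc :: "nat \<Rightarrow> nat \<Rightarrow> complex set" and p :: "nat \<Rightarrow> complex"
  assumes a1: "1 \<le> a" and w2: "2 \<le> w"
    and inj: "\<And>i i' j j'. i < a \<Longrightarrow> i' < a \<Longrightarrow> j < w \<Longrightarrow> j' < w \<Longrightarrow> Arc i j = Arc i' j' \<Longrightarrow> i = i' \<and> j = j'"
    and clus: "\<And>i i' j j' z. i < a \<Longrightarrow> i' < a \<Longrightarrow> j < w \<Longrightarrow> j' < w \<Longrightarrow> z \<in> Arc i j \<Longrightarrow> z \<in> Arc i' j' \<Longrightarrow> i = i'"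
    and pt: "\<And>i j. i < a \<Longrightarrow> j < w \<Longrightarrow> p i \<in> Arc i j"
    and sph: "p 0 \<in> sphere 0 1"
  defines "F \<equiv> (\<lambda>(i,j). Arc i j) ` ({..<a} \<times> {..<w})"
  shows "finite F" "indep_number F = a" "max_depth F = w"
    "a * (w div 2) * (w - w div 2) \<le> card (ig_edges F)"
proof -
  show fF: "finite F" unfolding F_def by simp
  have memF: "\<exists>i j. i < a \<and> j < w \<and> A = Arc i j" if "A \<in> F" for A using that unfolding F_def by auto
  have inF: "Arc i j \<in> F" if "i < a" "j < w" for i j using that unfolding F_def by auto
  let ?I = "{card S | S. S \<subseteq> F \<and> pairwise (\<lambda>A B. A \<inter> B = {}) S}"
  have finI: "finite ?I"
  proof -
    have "?I \<subseteq> {..card F}" using fF by (auto intro: card_mono)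
    then show ?thesis by (rule finite_subset) simp
  qed
  have Ile: "card S \<le> a" if S: "S \<subseteq> F" "pairwise (\<lambda>A B. A \<inter> B = {}) S" for S
  proof -
    define idx where "idx A = (SOME i. i < a \<and> (\<exists>j<w. A = Arc i j))" for A
    have idx: "idx A < a \<and> (\<exists>j<w. A = Arc (idx A) j)" if "A \<in> F" for A
    proof -
      have "\<exists>i. i < a \<and> (\<exists>j<w. A = Arc i j)" using memF[OF that] by blast
      then show ?thesis unfolding idx_def by (rule someI_ex)
    qed
    have "inj_on idx S"
    proof (rule inj_onI)
      fix A B assume AB: "A \<in> S" "B \<in> S" "idx A = idx B"
      obtain j where j: "j < w" "A = Arc (idx A) j" using idx AB S by blast
      obtain j' where j': "j' < w" "B = Arc (idx B) j'" using idx AB S by blast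
      have ia: "idx A < a" using idx AB S by blast
      have "p (idx A) \<in> A" using pt[OF ia j(1)] j(2) by simp
      moreover have "p (idx A) \<in> B" using pt[OF ia j'(1)] j'(2) AB(3) by simp
      ultimately
      show "A = B" using S(2) AB unfolding pairwise_def by blast
    qed
    moreover have "idx ` S \<subseteq> {..<a}" using idx S by auto
    ultimately show ?thesis using card_inj_on_le[of idx S "{..<a}"] by simp
  qed
  have "a \<in> ?I"
  proof -
    define S where "S = (\<lambda>i. Arc i 0) ` {..<a}"
    have "S \<subseteq> F" unfolding S_def using inF w2 by auto
    moreover have "pairwise (\<lambda>A B. A \<inter> B = {}) S"
      unfolding S_def pairwise_def
    proof (intro ballI impI)
      fix x y assume "x \<in> (\<lambda>i. Arc i 0) ` {..<a}" "y \<in> (\<lambda>i. Arc i 0) ` {..<a}" "x \<noteq> y"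
      then obtain i i' where "i < a" "i' < a" "x = Arc i 0" "y = Arc i' 0" "i \<noteq> i'" by auto
      then show "x \<inter> y = {}" using clus[of i i' 0 0] w2 by auto
    qed
    moreover have "card S = a" unfolding S_def
    proof -
      have "inj_on (\<lambda>i. Arc i 0) {..<a}" by (rule inj_onI) (use inj[of _ _ 0 0] w2 in auto)
      then show "card ((\<lambda>i. Arc i 0) ` {..<a}) = a" by (simp add: card_image)
    qed
    ultimately show ?thesis by force
  qed
  then show "indep_number F = a" unfolding indep_number_def
    using finI Ile by (intro Max_eqI) auto
  have finD: "finite (depth F ` sphere 0 1)"
  proof -
    have "depth F ` sphere 0 1 \<subseteq> {..card F}" unfolding depth_def using fF by (auto intro: card_mono)
    then show ?thesis by (rule finite_subset) simp
  qed
  have Dle: "depth F z \<le> w" for z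
  proof (cases "{A\<in>F. z \<in> A} = {}")
    case True then show ?thesis unfolding depth_def by (metis card.empty zero_le)
  next
    case False
    then obtain A0 where "A0 \<in> F" "z \<in> A0" by blast
    then obtain i0 j0 where ij0: "i0 < a" "j0 < w" "z \<in> Arc i0 j0" using memF by blast
    have "{A\<in>F. z \<in> A} \<subseteq> Arc i0 ` {..<w}"
    proof
      fix A assume "A \<in> {A\<in>F. z \<in> A}"
      then obtain i j where "i < a" "j < w" "A = Arc i j" "z \<in> A" using memF by blast
      then have "i = i0" using clus ij0 by blast
      then show "A \<in> Arc i0 ` {..<w}" using \<open>j < w\<close> \<open>A = Arc i j\<close> by blast
    qed
    then have "card {A\<in>F. z \<in> A} \<le> card (Arc i0 ` {..<w})" by (intro card_mono) auto
    also have "\<dots> \<le> w" using card_image_le[of "{..<w}" "Arc i0"] by simp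
    finally show ?thesis by (simp add: depth_def)
  qed
  have "w \<le> depth F (p 0)"
  proof -
    have "Arc 0 ` {..<w} \<subseteq> {A\<in>F. p 0 \<in> A}" using inF pt a1 by auto
    then have "card (Arc 0 ` {..<w}) \<le> card {A\<in>F. p 0 \<in> A}" using fF by (intro card_mono) auto
    moreover have "card (Arc 0 ` {..<w}) = w"
    proof -
      have "inj_on (Arc 0) {..<w}" by (rule inj_onI) (use inj[of 0 0] a1 in auto)
      then show ?thesis by (simp add: card_image)
    qed
    ultimately show ?thesis by (simp add: depth_def)
  qed
  then have "depth F (p 0) = w" using Dle[of "p 0"] by simp
  then show "max_depth F = w" unfolding max_depth_def
  proof (intro Max_eqI[OF finD])
    show "y \<le> w" if "y \<in> depth F ` sphere 0 1" for y using that Dle by auto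
    show "w \<in> depth F ` sphere 0 1" using sph \<open>depth F (p 0) = w\<close> by (metis image_eqI)
  qed
  define h where "h = w div 2"
  define D where "D = {..<a} \<times> {..<h} \<times> {h..<w}"
  define g where "g = (\<lambda>(i,j,j'). {Arc i j, Arc i j'})"
  have hw: "h < w" unfolding h_def using w2 by simp
  have "g ` D \<subseteq> ig_edges F"
  proof
    fix e assume "e \<in> g ` D"
    then obtain i j j' where ijj: "i < a" "j < h" "h \<le> j'" "j' < w" "e = {Arc i j, Arc i j'}"
      unfolding D_def g_def by auto
    have "Arc i j \<noteq> Arc i j'" using inj[of i i j j'] ijj hw by auto
    moreover have "p i \<in> Arc i j \<inter> Arc i j'" using pt ijj hw by auto
    ultimately show "e \<in> ig_edges F" unfolding ig_edges_def using ijj inF hw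
      by (intro CollectI exI[of _ "Arc i j"] exI[of _ "Arc i j'"]) auto
  qed
  moreover have "inj_on g D"
  proof (rule inj_onI)
    fix x y assume xy: "x \<in> D" "y \<in> D" "g x = g y"
    obtain i j j' where x: "x = (i,j,j')" "i < a" "j < h" "h \<le> j'" "j' < w" using xy D_def by auto
    obtain k l l' where y: "y = (k,l,l')" "k < a" "l < h" "h \<le> l'" "l' < w" using xy D_def by auto
    have "{Arc i j, Arc i j'} = {Arc k l, Arc k l'}" using xy x y g_def by simp
    then have "(Arc i j = Arc k l \<and> Arc i j' = Arc k l') \<or> (Arc i j = Arc k l' \<and> Arc i j' = Arc k l)"
      by (simp add: doubleton_eq_iff)
    then show "x = y"
    proof
      assume "Arc i j = Arc k l \<and> Arc i j' = Arc k l'"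
      then have "i = k \<and> j = l" "i = k \<and> j' = l'" using inj x y hw by (meson less_trans)+
      then show ?thesis using x y by simp
    next
      assume "Arc i j = Arc k l' \<and> Arc i j' = Arc k l"
      then have "j = l'" using inj x y hw by (meson less_trans)
      then show ?thesis using x y by simp
    qed
  qed
  moreover have "finite (ig_edges F)"
  proof -
    have "ig_edges F \<subseteq> (\<lambda>(A,B). {A,B}) ` (F \<times> F)" unfolding ig_edges_def by auto
    then show ?thesis using fF by (meson finite_SigmaI finite_imageI finite_subset)
  qed
  ultimately have "card D \<le> card (ig_edges F)" using card_inj_on_le by blast
  moreover have "card D = a * (h * (w - h))" unfolding D_def by (simp add: card_cartesian_product)
  ultimately show "a * (w div 2) * (w - w div 2) \<le> card (ig_edges F)" unfolding h_def by (simp add: mult.assoc)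
qed

lemma construction:
  fixes a w :: nat
  assumes a1: "1 \<le> a" and w2: "2 \<le> w"
  shows "\<exists>F. finite F \<and> (\<forall>A\<in>F. is_arc A) \<and> indep_number F = a \<and> max_depth F = w \<and>
           a * (w div 2) * (w - w div 2) \<le> card (ig_edges F)"
proof -
  define d where "d = pi / (real a * real w)"
  define s where "s i = 2 * pi * real i / real a" for i :: nat
  define Arc where "Arc i j = circ_arc (s i) (real (j+1) * d)" for i j :: nat
  define p where "p i = cis (s i)" for i :: nat
  have apos: "real a > 0" using a1 by simp
  have wpos: "real w > 0" using w2 by simp
  have dpos: "d > 0" unfolding d_def using apos wpos by simp
  have len: "real (j+1) * d \<le> pi / real a" if "j < w" for j
  proof -
    have "real (j+1) \<le> real w" using that by simp
    then have "real (j+1) * d \<le> real w * d" using dpos by (intro mult_right_mono) auto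
    also have "\<dots> = pi / real a" unfolding d_def using wpos by (simp add: field_simps)
    finally show ?thesis .
  qed
  have s0: "0 \<le> s i" for i unfolding s_def using apos by simp
  have sup: "s i + pi / real a < 2*pi" if "i < a" for i
  proof -
    have "2 * real i + 1 < 2 * real a" using that by linarith
    then have "pi * (2 * real i + 1) < pi * (2 * real a)" by simp
    then show ?thesis unfolding s_def using apos by (simp add: field_simps)
  qed
  have sep: "s i + pi / real a < s i'" if "i < i'" for i i'
  proof -
    have "2 * real i + 1 < 2 * real i'" using that by linarith
    then have "pi * (2 * real i + 1) < pi * (2 * real i')" by simp
    then have "pi * (2 * real i + 1) / real a < pi * (2 * real i') / real a"
      using apos by (intro divide_strict_right_mono)
    moreover have "s i + pi / real a = pi * (2 * real i + 1) / real a" unfolding s_def using apos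
      by (simp add: field_simps)
    moreover have "s i' = pi * (2 * real i') / real a" unfolding s_def by simp
    ultimately show ?thesis by simp
  qed
  have sinj: "s i = s i' \<Longrightarrow> i = i'" for i i' unfolding s_def using apos by simp
  have memb: "s i \<le> x \<and> x \<le> s i + real (j+1) * d"
    if "i < a" "j < w" "0 \<le> x" "x < 2*pi" and cx: "cis x \<in> Arc i j" for i j x
  proof -
    obtain y where y: "y \<in> {s i..s i + real (j+1) * d}" "cis x = cis y"
      using cx unfolding Arc_def circ_arc_def by blast
    have "0 \<le> y" "y < 2*pi" using y(1) s0[of i] sup[OF that(1)] len[OF that(2)] by auto
    then have "\<bar>x - y\<bar> < 2*pi" using that(3,4) by auto
    then have "x = y" using y(2) cis_inj_win by blast
    then show ?thesis using y by auto
  qed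
  have self: "cis x \<in> Arc i j" if "s i \<le> x" "x \<le> s i + real (j+1) * d" for i j x
    using that unfolding Arc_def circ_arc_def by auto
  have pt: "p i \<in> Arc i j" for i j unfolding p_def using dpos by (intro self) auto
  have inj: "i = i' \<and> j = j'" if "i < a" "i' < a" "j < w" "j' < w" "Arc i j = Arc i' j'" for i i' j j'
  proof -
    have pa: "pi / real a > 0" using apos by simp
    have lt: "s k < 2*pi" if "k < a" for k using sup[OF that] pa by linarith
    have m1: "cis (s i) \<in> Arc i' j'" using pt[of i j] that(5) unfolding p_def by simp
    have m2: "cis (s i') \<in> Arc i j" using pt[of i' j'] that(5) unfolding p_def by simp
    have "s i' \<le> s i" using memb[OF that(2) that(4) s0[of i] lt[OF that(1)] m1] by simp
    moreover have "s i \<le> s i'" using memb[OF that(1) that(3) s0[of i'] lt[OF that(2)] m2] by simp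
    ultimately have ii: "i = i'" using sinj by (meson order_antisym)
    have e1: "0 \<le> s i + real (j+1) * d" "s i + real (j+1) * d < 2*pi"
      using s0[of i] dpos sup[OF that(1)] len[OF that(3)] by auto
    have e2: "0 \<le> s i + real (j'+1) * d" "s i + real (j'+1) * d < 2*pi"
      using s0[of i] dpos sup[OF that(1)] len[OF that(4)] by auto
    have q1: "cis (s i + real (j+1) * d) \<in> Arc i j'"
    proof -
      have "cis (s i + real (j+1) * d) \<in> Arc i j" using dpos by (intro self) auto
      then show ?thesis using that(5) ii by simp
    qed
    have q2: "cis (s i + real (j'+1) * d) \<in> Arc i j"
    proof -
      have "cis (s i + real (j'+1) * d) \<in> Arc i j'" using dpos by (intro self) auto
      then show ?thesis using that(5) ii by simp
    qed
    have "s i + real (j+1) * d \<le> s i + real (j'+1) * d"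
      using memb[OF that(1) that(4) e1 q1] by simp
    moreover have "s i + real (j'+1) * d \<le> s i + real (j+1) * d"
      using memb[OF that(1) that(3) e2 q2] by simp
    ultimately have "real (j+1) * d = real (j'+1) * d" by linarith
    then have "j = j'" using dpos by simp
    then show ?thesis using ii by simp
  qed
  have clus1: "\<not> i < i'" if "i < a" "i' < a" "j < w" "j' < w" and zz: "z \<in> Arc i j" "z \<in> Arc i' j'" for i i' j j' z
  proof
    assume ii: "i < i'"
    obtain y where y: "y \<in> {s i..s i + real (j+1) * d}" "z = cis y"
      using zz(1) unfolding Arc_def circ_arc_def by blast
    have "0 \<le> y" "y < 2*pi" "y \<le> s i + pi / real a" using y(1) s0[of i] sup[OF that(1)] len[OF that(3)] by auto
    then have "s i' \<le> y" using memb[OF that(2) that(4)] zz(2) y(2) by auto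
    then show False using sep[OF ii] \<open>y \<le> s i + pi / real a\<close> by simp
  qed
  have clus: "i = i'" if "i < a" "i' < a" "j < w" "j' < w" "z \<in> Arc i j" "z \<in> Arc i' j'" for i i' j j' z
    using clus1[OF that] clus1[OF that(2,1,4,3,6,5)] by simp
  have sph: "p 0 \<in> sphere 0 1" unfolding p_def by simp
  define F where "F = (\<lambda>(i,j). Arc i j) ` ({..<a} \<times> {..<w})"
  note cf = cluster_family[where a=a and w=w and Arc=Arc and p=p, OF a1 w2 inj clus pt sph, folded F_def]
  have "\<forall>A\<in>F. is_arc A"
  proof
    fix A assume "A \<in> F"
    then obtain i j where "j < w" "A = Arc i j" unfolding F_def by auto
    moreover have "real (j+1) * d \<le> 2*pi"
    proof -
      have "pi \<le> pi * real a" using a1 by simp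
      then have "pi / real a \<le> pi" using apos by (simp add: divide_le_eq)
      then show ?thesis using len[OF \<open>j < w\<close>] pi_gt_zero by linarith
    qed
    moreover have "0 \<le> real (j+1) * d" using dpos by simp
    ultimately show "is_arc A" unfolding is_arc_def Arc_def by blast
  qed
  then have "finite F \<and> (\<forall>A\<in>F. is_arc A) \<and> indep_number F = a \<and> max_depth F = w \<and>
           a * (w div 2) * (w - w div 2) \<le> card (ig_edges F)"
    using cf(1) cf(2) cf(3) cf(4) by (intro conjI)
  then show ?thesis by (rule exI)
qed

lemma arith_hw: fixes w :: nat assumes "2 \<le> w" shows "w * w \<le> 8 * ((w div 2) * (w - w div 2))"
proof -
  have h1: "w \<le> 4 * (w div 2)" using assms by linarith
  have h2: "w \<le> 2 * (w - w div 2)" by linarith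
  have "w * w \<le> (4 * (w div 2)) * (2 * (w - w div 2))" using mult_le_mono[OF h1 h2] .
  then show ?thesis by (simp add: algebra_simps)
qed

theorem lemma2p4:
  shows "(\<exists>C::real. C > 0 \<and>
            (\<forall>F. finite F \<and> (\<forall>A\<in>F. is_arc A) \<longrightarrow>
               real (card (ig_edges F))
                 \<le> C * real (indep_number F) * (real (max_depth F))^2))
       \<and> (\<exists>c::real. c > 0 \<and>
            (\<forall>a w::nat. 1 \<le> a \<and> 2 \<le> w \<longrightarrow>
               (\<exists>F. finite F \<and> (\<forall>A\<in>F. is_arc A) \<and>
                    indep_number F = a \<and> max_depth F = w \<and>
                    real (card (ig_edges F)) \<ge> c * real a * (real w)^2)))"
proof (intro conjI)
  show "\<exists>C::real. C > 0 \<and>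
            (\<forall>F. finite F \<and> (\<forall>A\<in>F. is_arc A) \<longrightarrow>
               real (card (ig_edges F))
                 \<le> C * real (indep_number F) * (real (max_depth F))^2)"
  proof (intro exI[of _ 2] conjI allI impI)
    fix F :: "complex set set" assume h: "finite F \<and> (\<forall>A\<in>F. is_arc A)"
    show "real (card (ig_edges F)) \<le> 2 * real (indep_number F) * (real (max_depth F))^2"
      using part1[OF conjunct1[OF h] conjunct2[OF h]] .
  qed simp
  show "\<exists>c::real. c > 0 \<and>
            (\<forall>a w::nat. 1 \<le> a \<and> 2 \<le> w \<longrightarrow>
               (\<exists>F. finite F \<and> (\<forall>A\<in>F. is_arc A) \<and>
                    indep_number F = a \<and> max_depth F = w \<and>
                    real (card (ig_edges F)) \<ge> c * real a * (real w)^2))"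
  proof (intro exI[of _ "1/8"] conjI allI impI)
    fix a w :: nat assume aw: "1 \<le> a \<and> 2 \<le> w"
    obtain F where F: "finite F" "\<forall>A\<in>F. is_arc A" "indep_number F = a" "max_depth F = w"
       "a * (w div 2) * (w - w div 2) \<le> card (ig_edges F)"
      using construction[OF conjunct1[OF aw] conjunct2[OF aw]] by (elim exE conjE)
    have "a * (w * w) \<le> a * (8 * ((w div 2) * (w - w div 2)))"
      using arith_hw aw by (intro mult_le_mono2) auto
    moreover have "a * ((w div 2) * (w - w div 2)) \<le> card (ig_edges F)" using F(5) by (simp add: mult.assoc)
    ultimately have "a * (w * w) \<le> 8 * card (ig_edges F)" by linarith
    then have "real (a * (w * w)) \<le> real (8 * card (ig_edges F))" by linarith
    then have "1/8 * real a * (real w)^2 \<le> real (card (ig_edges F))"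
      by (simp add: power2_eq_square)
    then show "\<exists>F. finite F \<and> (\<forall>A\<in>F. is_arc A) \<and>
                    indep_number F = a \<and> max_depth F = w \<and>
                    real (card (ig_edges F)) \<ge> 1/8 * real a * (real w)^2"
      using F(1,2,3,4) by (intro exI[of _ F] conjI) assumption+
  qed simp
qed

end
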